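(* Let $d \ge 1$ be an integer. Neither the Boolean query $\mathrm{LOC}_d$ nor the Boolean query $\mathrm{GLO}_d$ on finite $\{\sim\}$-structures is definable in first-order logic. That is, there is no first-order $\{\sim\}$-sentence $\phi$ such that for every finite $\{\sim\}$-structure $\mathfrak{A}$ we have $\mathfrak{A} \models \phi$ if and only if $\mathfrak{A}$ is a graph that is locally $d$-rigid; and likewise there is no first-order $\{\sim\}$-sentence $\psi$ such that for every finite $\{\sim\}$-structure $\mathfrak{A}$ we have $\mathfrak{A} \models \psi$ if and only if $\mathfrak{A}$ is a graph that is globally $d$-rigid.
   Context: The vocabulary consists of a single binary relation symbol $\sim$. A finite $\{\sim\}$-structure is a pair $(V, E)$ with $V$ a finite set and $E \subseteq V \times V$. It is a graph if it satisfies the first-order sentence $\forall u\,\forall v\,(u \sim v \Rightarrow v \sim u)$; its edges are the pairs $\{x,y\}$ with $x \sim y$. First-order $\{\sim\}$-sentences are built from atomic formulas $v_i = v_j$ and $v_i \sim v_j$ using $\lnot,\land,\lor,\Rightarrow,\Leftrightarrow$ and quantifiers $\exists v_i$, $\forall v_i$, with no free variables. A Boolean query is a map from finite $\{\sim\}$-structures to $\{\mathrm{True},\mathrm{False}\}$; it is first-order definable if there is a first-order sentence $\phi$ with $Q(\mathfrak{A}) = \mathrm{True}$ iff $\mathfrak{A} \models \phi$. The queries are: $\mathrm{LOC}_d(\mathfrak{A}) = \mathrm{True}$ iff $\mathfrak{A}$ is a graph and is locally $d$-rigid; $\mathrm{GLO}_d(\mathfrak{A}) = \mathrm{True}$ iff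 $\mathfrak{A}$ is a graph and is globally $d$-rigid. Rigidity: a $d$-framework is a pair $(G,p)$ with $G=(V,E)$ a graph and $p: V \to \mathbb{R}^d$. Frameworks $(G,p)$ and $(G,q)$ are equivalent if $\|p(u)-p(v)\| = \|q(u)-q(v)\|$ for every edge $uv$, and congruent if this holds for all pairs $u,v \in V$. $(G,p)$ is globally rigid if every equivalent framework is congruent to it, and locally rigid if there is $\varepsilon>0$ such that every equivalent $(G,q)$ with $\|p(v)-q(v)\| \le \varepsilon$ for all $v$ is congruent to $(G,p)$. A graph $G$ is locally (resp. globally) $d$-rigid if $(G,p)$ is locally (resp. globally) rigid for Lebesgue-almost every $p: V \to \mathbb{R}^d$ (for each graph, either almost every $p$ has the property or almost every $p$ fails it). *)

theory Defs
  imports "HOL-Analysis.Analysis" "HOL-Probability.Probability"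
begin

datatype fo =
    FEq nat nat
  | FRel nat nat
  | FNot fo
  | FAnd fo fo
  | FOr fo fo
  | FImp fo fo
  | FIff fo fo
  | FEx nat fo
  | FAll nat fo

fun free_vars :: "fo \<Rightarrow> nat set" where
  "free_vars (FEq i j) = {i, j}"
| "free_vars (FRel i j) = {i, j}"
| "free_vars (FNot a) = free_vars a"
| "free_vars (FAnd a b) = free_vars a \<union> free_vars b"
| "free_vars (FOr a b) = free_vars a \<union> free_vars b"
| "free_vars (FImp a b) = free_vars a \<union> free_vars b"
| "free_vars (FIff a b) = free_vars a \<union> free_vars b"
| "free_vars (FEx i a) = free_vars a - {i}"
| "free_vars (FAll i a) = free_vars a - {i}"

definition sentence :: "fo \<Rightarrow> bool" where
  "sentence \<phi> \<longleftrightarrow> free_vars \<phi> = {}"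

fun sat :: "'a set \<Rightarrow> ('a \<times> 'a) set \<Rightarrow> (nat \<Rightarrow> 'a) \<Rightarrow> fo \<Rightarrow> bool" where
  "sat V E s (FEq i j) = (s i = s j)"
| "sat V E s (FRel i j) = ((s i, s j) \<in> E)"
| "sat V E s (FNot a) = (\<not> sat V E s a)"
| "sat V E s (FAnd a b) = (sat V E s a \<and> sat V E s b)"
| "sat V E s (FOr a b) = (sat V E s a \<or> sat V E s b)"
| "sat V E s (FImp a b) = (sat V E s a \<longrightarrow> sat V E s b)"
| "sat V E s (FIff a b) = (sat V E s a \<longleftrightarrow> sat V E s b)"
| "sat V E s (FEx i a) = (\<exists>x\<in>V. sat V E (s(i := x)) a)"
| "sat V E s (FAll i a) = (\<forall>x\<in>V. sat V E (s(i := x)) a)"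

text \<open>For sentences the assignment is irrelevant.\<close>
definition models :: "'a set \<Rightarrow> ('a \<times> 'a) set \<Rightarrow> fo \<Rightarrow> bool" where
  "models V E \<phi> \<longleftrightarrow> sat V E (\<lambda>_. undefined) \<phi>"

definition is_graph :: "('a \<times> 'a) set \<Rightarrow> bool" where
  "is_graph E \<longleftrightarrow> (\<forall>u v. (u, v) \<in> E \<longrightarrow> (v, u) \<in> E)"

definition equivalent_fw :: "'a set \<Rightarrow> ('a \<times> 'a) set \<Rightarrow> ('a \<Rightarrow> real^'d) \<Rightarrow> ('a \<Rightarrow> real^'d) \<Rightarrow> bool" where
  "equivalent_fw V E p q \<longleftrightarrow>
     (\<forall>u\<in>V. \<forall>v\<in>V. (u, v) \<in> E \<longrightarrow> norm (p u - p v) = norm (q u - q v))"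

definition congruent_fw :: "'a set \<Rightarrow> ('a \<Rightarrow> real^'d) \<Rightarrow> ('a \<Rightarrow> real^'d) \<Rightarrow> bool" where
  "congruent_fw V p q \<longleftrightarrow> (\<forall>u\<in>V. \<forall>v\<in>V. norm (p u - p v) = norm (q u - q v))"

definition globally_rigid_fw :: "'a set \<Rightarrow> ('a \<times> 'a) set \<Rightarrow> ('a \<Rightarrow> real^'d) \<Rightarrow> bool" where
  "globally_rigid_fw V E p \<longleftrightarrow> (\<forall>q. equivalent_fw V E p q \<longrightarrow> congruent_fw V p q)"

definition locally_rigid_fw :: "'a set \<Rightarrow> ('a \<times> 'a) set \<Rightarrow> ('a \<Rightarrow> real^'d) \<Rightarrow> bool" where
  "locally_rigid_fw V E p \<longleftrightarrow>
     (\<exists>\<epsilon>>0. \<forall>q. (\<forall>v\<in>V. norm (p v - q v) \<le> \<epsilon>) \<and> equivalent_fw V E p q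
                 \<longrightarrow> congruent_fw V p q)"

definition config_measure :: "'a set \<Rightarrow> 'd itself \<Rightarrow> ('a \<Rightarrow> real^'d::finite) measure" where
  "config_measure V _ = PiM V (\<lambda>_. lborel)"

definition locally_d_rigid :: "'d::finite itself \<Rightarrow> 'a set \<Rightarrow> ('a \<times> 'a) set \<Rightarrow> bool" where
  "locally_d_rigid D V E \<longleftrightarrow>
     (AE p in config_measure V D. locally_rigid_fw V E (p :: 'a \<Rightarrow> real^'d))"

definition globally_d_rigid :: "'d::finite itself \<Rightarrow> 'a set \<Rightarrow> ('a \<times> 'a) set \<Rightarrow> bool" where
  "globally_d_rigid D V E \<longleftrightarrow>
     (AE p in config_measure V D. globally_rigid_fw V E (p :: 'a \<Rightarrow> real^'d))"

definition LOC :: "'d::finite itself \<Rightarrow> nat set \<Rightarrow> (nat \<times> nat) set \<Rightarrow> bool" where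
  "LOC D V E \<longleftrightarrow> is_graph E \<and> locally_d_rigid D V E"

definition GLO :: "'d::finite itself \<Rightarrow> nat set \<Rightarrow> (nat \<times> nat) set \<Rightarrow> bool" where
  "GLO D V E \<longleftrightarrow> is_graph E \<and> globally_d_rigid D V E"

definition fo_definable :: "(nat set \<Rightarrow> (nat \<times> nat) set \<Rightarrow> bool) \<Rightarrow> bool" where
  "fo_definable Q \<longleftrightarrow> (\<exists>\<phi>. sentence \<phi> \<and>
     (\<forall>V E. finite V \<and> E \<subseteq> V \<times> V \<longrightarrow> (models V E \<phi> \<longleftrightarrow> Q V E)))"

end

theory Submission
  imports Defs
begin

fun qr :: "fo \<Rightarrow> nat" where
  "qr (FEq i j) = 0"
| "qr (FRel i j) = 0"
| "qr (FNot a) = qr a"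
| "qr (FAnd a b) = max (qr a) (qr b)"
| "qr (FOr a b) = max (qr a) (qr b)"
| "qr (FImp a b) = max (qr a) (qr b)"
| "qr (FIff a b) = max (qr a) (qr b)"
| "qr (FEx i a) = Suc (qr a)"
| "qr (FAll i a) = Suc (qr a)"

definition RelT :: "nat set \<Rightarrow> (nat \<Rightarrow> int \<Rightarrow> nat) \<Rightarrow> nat set \<Rightarrow> (nat \<Rightarrow> int \<Rightarrow> nat)
   \<Rightarrow> nat \<Rightarrow> nat set \<Rightarrow> (nat \<Rightarrow> nat) \<Rightarrow> (nat \<Rightarrow> nat) \<Rightarrow> bool" where
  "RelT VA shA VB shB t X s s' \<longleftrightarrow> (\<forall>i\<in>X. s i \<in> VA \<and> s' i \<in> VB) \<and>
     (\<forall>i\<in>X. \<forall>j\<in>X. \<forall>\<delta>. \<bar>\<delta>\<bar> \<le> int t \<longrightarrow> (s j = shA (s i) \<delta> \<longleftrightarrow> s' j = shB (s' i) \<delta>))"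

definition good_sh :: "nat set \<Rightarrow> (nat \<Rightarrow> int \<Rightarrow> nat) \<Rightarrow> nat \<Rightarrow> bool" where
  "good_sh V sh N \<longleftrightarrow> (\<forall>x\<in>V. \<forall>a. sh x a \<in> V) \<and> (\<forall>x\<in>V. sh x 0 = x) \<and>
     (\<forall>x\<in>V. \<forall>a b. sh (sh x a) b = sh x (a + b)) \<and> (\<forall>x\<in>V. \<forall>a. sh x a = x \<longleftrightarrow> int N dvd a)"

definition edges_of :: "nat set \<Rightarrow> (nat \<Rightarrow> int \<Rightarrow> nat) \<Rightarrow> nat \<Rightarrow> (nat \<times> nat) set" where
  "edges_of V sh m = {(x, y). x \<in> V \<and> y \<in> V \<and> (\<exists>\<delta>. 1 \<le> \<bar>\<delta>\<bar> \<and> \<bar>\<delta>\<bar> \<le> int m \<and> y = sh x \<delta>)}"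

lemma RelT_swap: "RelT VA shA VB shB t X s s' \<longleftrightarrow> RelT VB shB VA shA t X s' s"
  unfolding RelT_def by blast

lemma RelT_mono: "RelT VA shA VB shB t X s s' \<Longrightarrow> t' \<le> t \<Longrightarrow> Y \<subseteq> X \<Longrightarrow> RelT VA shA VB shB t' Y s s'"
  unfolding RelT_def by (meson order_trans of_nat_le_iff subsetD)

lemma good_back:
  assumes "good_sh V sh N" "x \<in> V" "y = sh x a"
  shows "x = sh y (- a)"
  using assms unfolding good_sh_def by auto

lemma far_exists:
  assumes "finite X" "finite VB" "card X * (2*t+1) < card VB"
  shows "\<exists>y\<in>VB. \<forall>j\<in>X. \<forall>\<delta>. \<bar>\<delta>\<bar> \<le> int t \<longrightarrow> y \<noteq> shB (s' j) \<delta>"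
proof -
  let ?F = "(\<lambda>(j, \<delta>). shB (s' j) \<delta>) ` (X \<times> {- int t..int t})"
  have "card ?F \<le> card (X \<times> {- int t..int t})" using assms(1) by (intro card_image_le) auto
  also have "\<dots> = card X * (2*t+1)" by (auto simp: card_cartesian_product nat_add_distrib nat_mult_distrib)
  finally have "card ?F < card VB" using assms(3) by linarith
  then have "\<not> VB \<subseteq> ?F" using assms by (meson card_mono finite_imageI finite_SigmaI finite_atLeastAtMost_int not_le)
  then obtain y where "y \<in> VB" "y \<notin> ?F" by blast
  then show ?thesis by (intro bexI[of _ y]) force+
qed

lemma good_eq:
  assumes g: "good_sh V sh N" and z: "z \<in> V" and w: "w \<in> V"
  shows "(sh z a = sh w b) \<longleftrightarrow> (z = sh w (b - a))"
proof
  assume h: "sh z a = sh w b"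
  have "z = sh (sh z a) (-a)" using g z unfolding good_sh_def by simp
  also have "\<dots> = sh w (b - a)" using h g w unfolding good_sh_def by simp
  finally show "z = sh w (b - a)" .
next
  assume h: "z = sh w (b - a)"
  then show "sh z a = sh w b" using g w unfolding good_sh_def by simp
qed

lemma forth:
  assumes gA: "good_sh VA shA N" and gB: "good_sh VB shB N"
    and R: "RelT VA shA VB shB (2*t) X s s'" and fin: "finite X" "finite VB"
    and iX: "i \<notin> X" and x: "x \<in> VA" and big: "card X * (2*t+1) < card VB"
  shows "\<exists>y\<in>VB. RelT VA shA VB shB t (insert i X) (s(i:=x)) (s'(i:=y))"
proof -
  have memA: "\<And>j. j\<in>X \<Longrightarrow> s j \<in> VA" and memB: "\<And>j. j\<in>X \<Longrightarrow> s' j \<in> VB" using R unfolding RelT_def by auto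
  have RR: "\<And>j k \<delta>. j\<in>X \<Longrightarrow> k\<in>X \<Longrightarrow> \<bar>\<delta>\<bar> \<le> int (2*t) \<Longrightarrow> (s k = shA (s j) \<delta> \<longleftrightarrow> s' k = shB (s' j) \<delta>)"
    using R unfolding RelT_def by blast
  have A0: "\<And>z. z \<in> VA \<Longrightarrow> shA z 0 = z" and Ac: "\<And>z a b. z \<in> VA \<Longrightarrow> shA (shA z a) b = shA z (a+b)"
    and Am: "\<And>z a. z \<in> VA \<Longrightarrow> shA z a \<in> VA" and As: "\<And>z a. z \<in> VA \<Longrightarrow> shA z a = z \<longleftrightarrow> int N dvd a"
    using gA unfolding good_sh_def by auto
  have B0: "\<And>z. z \<in> VB \<Longrightarrow> shB z 0 = z" and Bc: "\<And>z a b. z \<in> VB \<Longrightarrow> shB (shB z a) b = shB z (a+b)"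
    and Bm: "\<And>z a. z \<in> VB \<Longrightarrow> shB z a \<in> VB" and Bs: "\<And>z a. z \<in> VB \<Longrightarrow> shB z a = z \<longleftrightarrow> int N dvd a"
    using gB unfolding good_sh_def by auto
  have eqA: "\<And>z a b. z \<in> VA \<Longrightarrow> shA z a = shA z b \<longleftrightarrow> shA z (a - b) = z"
  proof -
    fix z a b assume z: "z \<in> VA"
    show "shA z a = shA z b \<longleftrightarrow> shA z (a - b) = z"
    proof
      assume "shA z a = shA z b"
      then have "shA (shA z a) (-b) = shA (shA z b) (-b)" by simp
      then show "shA z (a - b) = z" using z Ac A0 by simp
    next
      assume h: "shA z (a - b) = z"
      have "shA z a = shA (shA z (a-b)) b" using z Ac by simp
      then show "shA z a = shA z b" using h by simp
    qed
  qed
  show ?thesis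
  proof (cases "\<exists>j\<in>X. \<exists>\<delta>. \<bar>\<delta>\<bar> \<le> int t \<and> x = shA (s j) \<delta>")
    case True
    then obtain j \<delta> where j: "j \<in> X" "\<bar>\<delta>\<bar> \<le> int t" "x = shA (s j) \<delta>" by blast
    define y where "y = shB (s' j) \<delta>"
    have yB: "y \<in> VB" using Bm memB j unfolding y_def by auto
    have "RelT VA shA VB shB t (insert i X) (s(i:=x)) (s'(i:=y))"
      unfolding RelT_def
    proof (intro conjI ballI allI impI)
      fix k assume "k \<in> insert i X" then show "(s(i := x)) k \<in> VA"
        using x memA by auto
    next
      fix k assume "k \<in> insert i X" then show "(s'(i := y)) k \<in> VB"
        using yB memB by auto
    next
      fix u v \<epsilon> assume u: "u \<in> insert i X" and v: "v \<in> insert i X" and e: "\<bar>\<epsilon>\<bar> \<le> int t"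
      show "((s(i := x)) v = shA ((s(i := x)) u) \<epsilon>) = ((s'(i := y)) v = shB ((s'(i := y)) u) \<epsilon>)"
      proof (cases "u = i")
        case ui: True
        show ?thesis
        proof (cases "v = i")
          case True
          have "(x = shA x \<epsilon>) = (y = shB y \<epsilon>)" using As[OF x, of \<epsilon>] Bs[OF yB, of \<epsilon>] eq_commute[of x "shA x \<epsilon>"] eq_commute[of y "shB y \<epsilon>"] by (simp only:)
          then show ?thesis using ui True by simp
        next
          case False
          then have vX: "v \<in> X" using v by auto
          have "(s v = shA x \<epsilon>) = (s v = shA (s j) (\<delta> + \<epsilon>))" using j Ac memA by simp
          also have "\<dots> = (s' v = shB (s' j) (\<delta> + \<epsilon>))" using RR[OF j(1) vX] j e by simp
          also have "\<dots> = (s' v = shB y \<epsilon>)" using y_def Bc memB j by simp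
          finally show ?thesis using ui False by simp
        qed
      next
        case uni: False
        then have uX: "u \<in> X" using u by auto
        show ?thesis
        proof (cases "v = i")
          case vi: True
          have "(x = shA (s u) \<epsilon>) = (shA (s j) \<delta> = shA (s u) \<epsilon>)" using j by simp
          also have "\<dots> = (s j = shA (s u) (\<epsilon> - \<delta>))" using good_eq[OF gA memA[OF j(1)] memA[OF uX]] .
          also have "\<dots> = (s' j = shB (s' u) (\<epsilon> - \<delta>))" using RR[OF uX j(1)] j e by simp
          also have "\<dots> = (shB (s' j) \<delta> = shB (s' u) \<epsilon>)" using good_eq[OF gB memB[OF j(1)] memB[OF uX]] by simp
          finally show ?thesis using vi uni y_def by simp
        next
          case False
          then have vX: "v \<in> X" using v by auto
          then show ?thesis using RR[OF uX vX] e uni False by simp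
        qed
      qed
    qed
    then show ?thesis using yB by blast
  next
    case False
    then have farA: "\<And>j \<delta>. j\<in>X \<Longrightarrow> \<bar>\<delta>\<bar> \<le> int t \<Longrightarrow> x \<noteq> shA (s j) \<delta>" by blast
    obtain y where yB: "y \<in> VB" and farB: "\<And>j \<delta>. j\<in>X \<Longrightarrow> \<bar>\<delta>\<bar> \<le> int t \<Longrightarrow> y \<noteq> shB (s' j) \<delta>"
      using far_exists[OF fin big, of shB s'] by blast
    have "RelT VA shA VB shB t (insert i X) (s(i:=x)) (s'(i:=y))"
      unfolding RelT_def
    proof (intro conjI ballI allI impI)
      fix k assume "k \<in> insert i X" then show "(s(i := x)) k \<in> VA"
        using x memA by auto
    next
      fix k assume "k \<in> insert i X" then show "(s'(i := y)) k \<in> VB"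
        using yB memB by auto
    next
      fix u v \<epsilon> assume u: "u \<in> insert i X" and v: "v \<in> insert i X" and e: "\<bar>\<epsilon>\<bar> \<le> int t"
      show "((s(i := x)) v = shA ((s(i := x)) u) \<epsilon>) = ((s'(i := y)) v = shB ((s'(i := y)) u) \<epsilon>)"
      proof (cases "u = i")
        case ui: True
        show ?thesis
        proof (cases "v = i")
          case True
          have "(x = shA x \<epsilon>) = (y = shB y \<epsilon>)" using As[OF x, of \<epsilon>] Bs[OF yB, of \<epsilon>] eq_commute[of x "shA x \<epsilon>"] eq_commute[of y "shB y \<epsilon>"] by (simp only:)
          then show ?thesis using ui True by simp
        next
          case False
          then have vX: "v \<in> X" using v by auto
          have "s v \<noteq> shA x \<epsilon>"
          proof
            assume "s v = shA x \<epsilon>"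
            then have "x = shA (s v) (-\<epsilon>)" using good_back[OF gA x] by blast
            then show False using farA[OF vX, of "-\<epsilon>"] e by simp
          qed
          moreover have "s' v \<noteq> shB y \<epsilon>"
          proof
            assume "s' v = shB y \<epsilon>"
            then have "y = shB (s' v) (-\<epsilon>)" using good_back[OF gB yB] by blast
            then show False using farB[OF vX, of "-\<epsilon>"] e by simp
          qed
          ultimately show ?thesis using ui False by simp
        qed
      next
        case uni: False
        then have uX: "u \<in> X" using u by auto
        show ?thesis
        proof (cases "v = i")
          case vi: True
          then show ?thesis using farA[OF uX e] farB[OF uX e] uni by simp
        next
          case False
          then have vX: "v \<in> X" using v by auto
          then show ?thesis using RR[OF uX vX] e uni False by simp
        qed
      qed
    qed
    then show ?thesis using yB by blast
  qed
qed


lemma ex_step: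
  assumes gA: "good_sh VA shA N" and gB: "good_sh VB shB N"
    and fX: "finite X" and fB: "finite VB"
    and R: "RelT VA shA VB shB (m * 2 ^ Suc q) X s s'"
    and cq: "card X + Suc q \<le> K" and big: "K * (2*(m*2^K)+1) < card VB"
    and x: "x \<in> VA"
  shows "\<exists>y\<in>VB. RelT VA shA VB shB (m * 2 ^ q) (insert i (X - {i})) (s(i:=x)) (s'(i:=y))
           \<and> card (insert i (X - {i})) + q \<le> K"
proof -
  have R0: "RelT VA shA VB shB (2 * (m * 2 ^ q)) (X - {i}) s s'"
    using RelT_mono[OF R] by (simp add: mult.commute mult.left_commute)
  have c0: "card (X - {i}) \<le> K" using cq card_Diff1_le[of X i] by linarith
  have "2 ^ q \<le> (2::nat) ^ K" using cq by (intro power_increasing) auto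
  then have t: "m * 2 ^ q \<le> m * 2 ^ K" by simp
  have "card (X - {i}) * (2 * (m * 2 ^ q) + 1) \<le> K * (2*(m*2^K)+1)"
    using c0 t by (intro mult_le_mono) auto
  then have bg: "card (X - {i}) * (2 * (m * 2 ^ q) + 1) < card VB" using big by linarith
  obtain y where y: "y \<in> VB" "RelT VA shA VB shB (m * 2 ^ q) (insert i (X - {i})) (s(i:=x)) (s'(i:=y))"
    using forth[OF gA gB R0 _ fB _ x bg, of i] fX by auto
  have "card (insert i (X - {i})) \<le> card X + 1"
    using fX card_Diff1_le[of X i] by (simp add: card_insert_if)
  then show ?thesis using y cq by auto
qed

lemma ef:
  assumes gA: "good_sh VA shA N" and gB: "good_sh VB shB N"
    and fA: "finite VA" and fB: "finite VB"
    and bigA: "K * (2*(m*2^K)+1) < card VA" and bigB: "K * (2*(m*2^K)+1) < card VB"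
  shows "finite X \<Longrightarrow> free_vars \<phi> \<subseteq> X \<Longrightarrow> RelT VA shA VB shB (m * 2 ^ qr \<phi>) X s s'
     \<Longrightarrow> card X + qr \<phi> \<le> K
     \<Longrightarrow> sat VA (edges_of VA shA m) s \<phi> = sat VB (edges_of VB shB m) s' \<phi>"
proof (induction \<phi> arbitrary: X s s')
  case (FEq i j)
  then have "i \<in> X" "j \<in> X" by auto
  then have "s i \<in> VA" "s' i \<in> VB" and "(s j = shA (s i) 0) = (s' j = shB (s' i) 0)"
    using FEq.prems(3) unfolding RelT_def by auto
  moreover have "shA (s i) 0 = s i" "shB (s' i) 0 = s' i" using gA gB \<open>s i \<in> VA\<close> \<open>s' i \<in> VB\<close> unfolding good_sh_def by blast+
  ultimately show ?case by (simp; metis)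
next
  case (FRel i j)
  then have ij: "i \<in> X" "j \<in> X" by auto
  then have mem: "s i \<in> VA" "s' i \<in> VB" "s j \<in> VA" "s' j \<in> VB"
    using FRel.prems(3) unfolding RelT_def by auto
  have H: "\<And>\<delta>. \<bar>\<delta>\<bar> \<le> int m \<Longrightarrow> (s j = shA (s i) \<delta>) = (s' j = shB (s' i) \<delta>)"
    using FRel.prems(3) ij unfolding RelT_def by simp
  have ex: "(\<exists>\<delta>. 1 \<le> \<bar>\<delta>\<bar> \<and> \<bar>\<delta>\<bar> \<le> int m \<and> s j = shA (s i) \<delta>) = (\<exists>\<delta>. 1 \<le> \<bar>\<delta>\<bar> \<and> \<bar>\<delta>\<bar> \<le> int m \<and> s' j = shB (s' i) \<delta>)"
    using H by blast
  show ?case using mem ex unfolding edges_of_def by simp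
next
  case (FNot a)
  then show ?case by simp
next
  case (FAnd a b)
  have "sat VA (edges_of VA shA m) s a = sat VB (edges_of VB shB m) s' a"
    using FAnd.prems by (intro FAnd.IH(1)) (auto intro: RelT_mono[OF FAnd.prems(3)])
  moreover have "sat VA (edges_of VA shA m) s b = sat VB (edges_of VB shB m) s' b"
    using FAnd.prems by (intro FAnd.IH(2)) (auto intro: RelT_mono[OF FAnd.prems(3)])
  ultimately show ?case by simp
next
  case (FOr a b)
  have "sat VA (edges_of VA shA m) s a = sat VB (edges_of VB shB m) s' a"
    using FOr.prems by (intro FOr.IH(1)) (auto intro: RelT_mono[OF FOr.prems(3)])
  moreover have "sat VA (edges_of VA shA m) s b = sat VB (edges_of VB shB m) s' b"
    using FOr.prems by (intro FOr.IH(2)) (auto intro: RelT_mono[OF FOr.prems(3)])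
  ultimately show ?case by simp
next
  case (FImp a b)
  have "sat VA (edges_of VA shA m) s a = sat VB (edges_of VB shB m) s' a"
    using FImp.prems by (intro FImp.IH(1)) (auto intro: RelT_mono[OF FImp.prems(3)])
  moreover have "sat VA (edges_of VA shA m) s b = sat VB (edges_of VB shB m) s' b"
    using FImp.prems by (intro FImp.IH(2)) (auto intro: RelT_mono[OF FImp.prems(3)])
  ultimately show ?case by simp
next
  case (FIff a b)
  have "sat VA (edges_of VA shA m) s a = sat VB (edges_of VB shB m) s' a"
    using FIff.prems by (intro FIff.IH(1)) (auto intro: RelT_mono[OF FIff.prems(3)])
  moreover have "sat VA (edges_of VA shA m) s b = sat VB (edges_of VB shB m) s' b"
    using FIff.prems by (intro FIff.IH(2)) (auto intro: RelT_mono[OF FIff.prems(3)])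
  ultimately show ?case by simp
next
  case (FEx i a)
  have fv: "free_vars a \<subseteq> insert i (X - {i})" using FEx.prems(2) by auto
  have fX': "finite (insert i (X - {i}))" using FEx.prems(1) by simp
  have R: "RelT VA shA VB shB (m * 2 ^ Suc (qr a)) X s s'" using FEx.prems(3) by simp
  have cq: "card X + Suc (qr a) \<le> K" using FEx.prems(4) by simp
  show ?case
  proof
    assume "sat VA (edges_of VA shA m) s (FEx i a)"
    then obtain x where x: "x \<in> VA" "sat VA (edges_of VA shA m) (s(i:=x)) a" by auto
    obtain y where y: "y \<in> VB" "RelT VA shA VB shB (m * 2 ^ qr a) (insert i (X - {i})) (s(i:=x)) (s'(i:=y))"
      "card (insert i (X - {i})) + qr a \<le> K"
      using ex_step[OF gA gB FEx.prems(1) fB R cq bigB x(1)] by blast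
    then have "sat VB (edges_of VB shB m) (s'(i:=y)) a" using FEx.IH[OF fX' fv y(2) y(3)] x(2) by blast
    then show "sat VB (edges_of VB shB m) s' (FEx i a)" using y by auto
  next
    assume "sat VB (edges_of VB shB m) s' (FEx i a)"
    then obtain y where y: "y \<in> VB" "sat VB (edges_of VB shB m) (s'(i:=y)) a" by auto
    obtain x where x: "x \<in> VA" "RelT VB shB VA shA (m * 2 ^ qr a) (insert i (X - {i})) (s'(i:=y)) (s(i:=x))"
      "card (insert i (X - {i})) + qr a \<le> K"
      using ex_step[OF gB gA FEx.prems(1) fA R[unfolded RelT_swap[of VA]] cq bigA y(1)] by blast
    then have "sat VA (edges_of VA shA m) (s(i:=x)) a" using FEx.IH[OF fX' fv x(2)[unfolded RelT_swap[of VB]] x(3)] y(2) by blast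
    then show "sat VA (edges_of VA shA m) s (FEx i a)" using x by auto
  qed
next
  case (FAll i a)
  have fv: "free_vars a \<subseteq> insert i (X - {i})" using FAll.prems(2) by auto
  have fX': "finite (insert i (X - {i}))" using FAll.prems(1) by simp
  have R: "RelT VA shA VB shB (m * 2 ^ Suc (qr a)) X s s'" using FAll.prems(3) by simp
  have cq: "card X + Suc (qr a) \<le> K" using FAll.prems(4) by simp
  show ?case
  proof
    assume H: "sat VA (edges_of VA shA m) s (FAll i a)"
    show "sat VB (edges_of VB shB m) s' (FAll i a)"
    proof (simp, intro ballI)
      fix y assume y: "y \<in> VB"
      obtain x where x: "x \<in> VA" "RelT VB shB VA shA (m * 2 ^ qr a) (insert i (X - {i})) (s'(i:=y)) (s(i:=x))"
        "card (insert i (X - {i})) + qr a \<le> K"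
        using ex_step[OF gB gA FAll.prems(1) fA R[unfolded RelT_swap[of VA]] cq bigA y] by blast
      moreover have "sat VA (edges_of VA shA m) (s(i:=x)) a" using H x(1) by simp
      ultimately show "sat VB (edges_of VB shB m) (s'(i:=y)) a" using FAll.IH[OF fX' fv x(2)[unfolded RelT_swap[of VB]] x(3)] by blast
    qed
  next
    assume H: "sat VB (edges_of VB shB m) s' (FAll i a)"
    show "sat VA (edges_of VA shA m) s (FAll i a)"
    proof (simp, intro ballI)
      fix x assume x: "x \<in> VA"
      obtain y where y: "y \<in> VB" "RelT VA shA VB shB (m * 2 ^ qr a) (insert i (X - {i})) (s(i:=x)) (s'(i:=y))"
        "card (insert i (X - {i})) + qr a \<le> K"
        using ex_step[OF gA gB FAll.prems(1) fB R cq bigB x] by blast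
      moreover have "sat VB (edges_of VB shB m) (s'(i:=y)) a" using H y(1) by simp
      ultimately show "sat VA (edges_of VA shA m) (s(i:=x)) a" using FAll.IH[OF fX' fv y(2) y(3)] by blast
    qed
  qed
qed

lemma ef_sentence:
  assumes gA: "good_sh VA shA N" and gB: "good_sh VB shB N"
    and fA: "finite VA" and fB: "finite VB"
    and bigA: "qr \<phi> * (2*(m*2^qr \<phi>)+1) < card VA" and bigB: "qr \<phi> * (2*(m*2^qr \<phi>)+1) < card VB"
    and "sentence \<phi>"
  shows "models VA (edges_of VA shA m) \<phi> = models VB (edges_of VB shB m) \<phi>"
  unfolding models_def
  by (rule ef[OF gA gB fA fB bigA bigB]) (use assms(7) in \<open>auto simp: sentence_def RelT_def\<close>)

definition shA :: "nat \<Rightarrow> nat \<Rightarrow> int \<Rightarrow> nat" where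
  "shA N x \<delta> = nat ((int x + \<delta>) mod int N)"

definition shB :: "nat \<Rightarrow> nat \<Rightarrow> int \<Rightarrow> nat" where
  "shB N x \<delta> = (x div N) * N + shA N (x mod N) \<delta>"

lemma shA_lt: "0 < N \<Longrightarrow> shA N x a < N"
  unfolding shA_def by (simp add: nat_less_iff)

lemma shA_int: "0 < N \<Longrightarrow> int (shA N x a) = (int x + a) mod int N"
  unfolding shA_def by simp

lemma shA_comp: "0 < N \<Longrightarrow> shA N (shA N x a) b = shA N x (a + b)"
  unfolding shA_def by (simp add: mod_add_left_eq add.assoc)

lemma shA_zero: "x < N \<Longrightarrow> shA N x 0 = x"
  unfolding shA_def by (simp add: nat_mod_as_int[symmetric])

lemma shA_stab: "x < N \<Longrightarrow> shA N x a = x \<longleftrightarrow> int N dvd a"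
proof -
  assume x: "x < N"
  then have N: "0 < N" by simp
  have "shA N x a = x \<longleftrightarrow> (int x + a) mod int N = int x"
    using shA_int[OF N, of x a] by (metis of_nat_eq_iff)
  also have "\<dots> \<longleftrightarrow> (int x + a) mod int N = int x mod int N" using x by simp
  also have "\<dots> \<longleftrightarrow> int N dvd a" by (simp add: mod_eq_dvd_iff)
  finally show ?thesis .
qed

lemma good_A: "0 < N \<Longrightarrow> good_sh {0..<N} (shA N) N"
  unfolding good_sh_def using shA_lt shA_comp shA_zero shA_stab by auto

lemma shB_div: "0 < N \<Longrightarrow> shB N x a div N = x div N"
  unfolding shB_def using shA_lt by simp

lemma shB_mod: "0 < N \<Longrightarrow> shB N x a mod N = shA N (x mod N) a"
  unfolding shB_def using shA_lt by simp

lemma good_B: "0 < N \<Longrightarrow> good_sh {0..<2*N} (shB N) N"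
proof -
  assume N: "0 < N"
  have cl: "shB N x a < 2 * N" if "x < 2 * N" for x a
  proof -
    have "x div N < 2" using that by (simp add: less_mult_imp_div_less)
    then have "x div N \<le> 1" by simp
    then have "(x div N) * N \<le> N" by simp
    then show ?thesis unfolding shB_def using shA_lt[OF N, of "x mod N" a] by linarith
  qed
  have z: "shB N x 0 = x" for x
    unfolding shB_def using shA_zero[of "x mod N" N] N by simp
  have c: "shB N (shB N x a) b = shB N x (a + b)" for x a b
    unfolding shB_def[of N "shB N x a"] using shB_div[OF N] shB_mod[OF N] shA_comp[OF N]
    by (simp add: shB_def[of N x "a+b"])
  have s: "shB N x a = x \<longleftrightarrow> int N dvd a" for x a
  proof -
    have "shB N x a = x \<longleftrightarrow> shA N (x mod N) a = x mod N"
      unfolding shB_def by (metis add_left_cancel mod_div_mult_eq add.commute)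
    also have "\<dots> \<longleftrightarrow> int N dvd a" using shA_stab[of "x mod N" N] N by simp
    finally show ?thesis .
  qed
  show ?thesis unfolding good_sh_def using cl z c s by auto
qed

lemma prod_sf_lborel: "product_sigma_finite (\<lambda>_. lborel :: ('b::euclidean_space) measure)"
  by (simp add: product_sigma_finite_def sigma_finite_lborel)

lemma space_config_pos:
  assumes "finite V"
  shows "emeasure (PiM V (\<lambda>_. lborel :: ('b::euclidean_space) measure)) (space (PiM V (\<lambda>_. lborel))) \<noteq> 0"
proof -
  have "emeasure (PiM V (\<lambda>_. lborel :: 'b measure)) (PiE V (\<lambda>_. UNIV)) = (\<Prod>i\<in>V. emeasure lborel (UNIV :: 'b set))"
    by (rule product_sigma_finite.emeasure_PiM[OF prod_sf_lborel assms]) auto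
  also have "\<dots> \<noteq> 0" using assms by (simp add: prod_zero_iff)
  finally show ?thesis by (simp add: space_PiM)
qed

lemma not_AE_if_never:
  assumes "finite V" "\<And>p. \<not> P p"
  shows "\<not> (AE p in PiM V (\<lambda>_. lborel :: ('b::euclidean_space) measure). P p)"
proof
  assume "AE p in PiM V (\<lambda>_. lborel :: 'b measure). P p"
  then have "AE p in PiM V (\<lambda>_. lborel :: 'b measure). False" using assms(2) by simp
  then have "emeasure (PiM V (\<lambda>_. lborel :: 'b measure)) (space (PiM V (\<lambda>_. lborel))) = 0"
    by (subst (asm) AE_iff_measurable[OF _ refl]) auto
  then show False using space_config_pos[OF assms(1)] by blast
qed

lemma two_choices:
  fixes w e :: "'b::real_inner"
  assumes "norm e = 1" "\<epsilon> > 0"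
  shows "norm (w - \<epsilon> *\<^sub>R e) \<noteq> norm w \<or> norm (w + \<epsilon> *\<^sub>R e) \<noteq> norm w"
proof (rule ccontr)
  assume "\<not> ?thesis"
  then have "norm (w - \<epsilon> *\<^sub>R e)^2 + norm (w + \<epsilon> *\<^sub>R e)^2 = 2 * norm w ^2" by simp
  moreover have "norm (w - \<epsilon> *\<^sub>R e)^2 + norm (w + \<epsilon> *\<^sub>R e)^2 = 2 * norm w ^2 + 2 * \<epsilon>^2"
  proof -
    have ee: "e \<bullet> e = 1" using assms(1) by (simp add: norm_eq_1)
    show ?thesis unfolding power2_norm_eq_inner
      by (simp add: inner_diff inner_add inner_diff_right inner_add_right ee algebra_simps power2_eq_square)
  qed
  ultimately show False using assms(2) by simp
qed

lemma B_not_loc: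
  fixes p :: "nat \<Rightarrow> real^'d"
  assumes N: "0 < N"
  shows "\<not> locally_rigid_fw {0..<2*N} (edges_of {0..<2*N} (shB N) m) p"
proof
  assume "locally_rigid_fw {0..<2*N} (edges_of {0..<2*N} (shB N) m) p"
  then obtain \<epsilon> where e: "\<epsilon> > 0" and H: "\<And>q. (\<forall>v\<in>{0..<2*N}. norm (p v - q v) \<le> \<epsilon>) \<and>
       equivalent_fw {0..<2*N} (edges_of {0..<2*N} (shB N) m) p q \<longrightarrow> congruent_fw {0..<2*N} p q"
    unfolding locally_rigid_fw_def by blast
  define e1 :: "real^'d" where "e1 = axis undefined 1"
  have ne: "norm e1 = 1" unfolding e1_def by simp
  obtain t :: "real^'d" where nt: "norm t = \<epsilon>" and tw: "norm (p 0 - p N - t) \<noteq> norm (p 0 - p N)"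
  proof (cases "norm (p 0 - p N - \<epsilon> *\<^sub>R e1) \<noteq> norm (p 0 - p N)")
    case True then show ?thesis using that[of "\<epsilon> *\<^sub>R e1"] ne e by simp
  next
    case False
    then have "norm (p 0 - p N + \<epsilon> *\<^sub>R e1) \<noteq> norm (p 0 - p N)" using two_choices[OF ne e] by blast
    then show ?thesis using that[of "- (\<epsilon> *\<^sub>R e1)"] ne e by (simp add: diff_minus_eq_add)
  qed
  define q where "q = (\<lambda>v. if N \<le> v then p v + t else p v)"
  have "\<forall>v\<in>{0..<2*N}. norm (p v - q v) \<le> \<epsilon>" unfolding q_def using nt e by simp
  moreover have "equivalent_fw {0..<2*N} (edges_of {0..<2*N} (shB N) m) p q"
    unfolding equivalent_fw_def
  proof (intro ballI impI)
    fix u v assume "(u, v) \<in> edges_of {0..<2*N} (shB N) m"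
    then obtain \<delta> where "v = shB N u \<delta>" unfolding edges_of_def by blast
    then have "v div N = u div N" using shB_div[OF N] by simp
    then have "(N \<le> v) = (N \<le> u)" using N by (metis div_greater_zero_iff)
    then show "norm (p u - p v) = norm (q u - q v)" unfolding q_def by auto
  qed
  ultimately have "congruent_fw {0..<2*N} p q" using H by blast
  then have "norm (p 0 - p N) = norm (q 0 - q N)" unfolding congruent_fw_def using N by auto
  then show False using tw unfolding q_def using N by (simp add: algebra_simps)
qed

definition indep_rows :: "('d::finite \<Rightarrow> real^'d) \<Rightarrow> bool" where
  "indep_rows a \<longleftrightarrow> (\<forall>k. (\<Sum>r\<in>UNIV. k r *\<^sub>R a r) = 0 \<longrightarrow> (\<forall>r. k r = 0))"

lemma transpose_mv: "transpose (\<chi> r. a r) *v k = (\<Sum>r\<in>UNIV. (k $ r) *\<^sub>R a r)"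
  by (simp add: vec_eq_iff matrix_vector_mult_def transpose_def sum_component mult.commute)

lemma ker_transpose:
  fixes a :: "'d::finite \<Rightarrow> real^'d"
  assumes "indep_rows a"
  shows "\<forall>x. transpose (\<chi> r. a r) *v x = 0 \<longrightarrow> x = 0"
proof (intro allI impI)
  fix x assume "transpose (\<chi> r. a r) *v x = 0"
  then have "(\<Sum>r\<in>UNIV. (x $ r) *\<^sub>R a r) = 0" unfolding transpose_mv .
  then have "\<forall>r. x $ r = 0" using assms unfolding indep_rows_def by blast
  then show "x = 0" by (simp add: vec_eq_iff)
qed

lemma ker_rows:
  fixes a :: "'d::finite \<Rightarrow> real^'d"
  assumes "indep_rows a"
  shows "\<forall>x. (\<chi> r. a r) *v x = 0 \<longrightarrow> x = 0"
proof -
  let ?M = "(\<chi> r. a r) :: real^'d^'d"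
  obtain B where "B ** transpose ?M = mat 1"
    using ker_transpose[OF assms] matrix_left_invertible_ker by blast
  then have "transpose ?M ** B = mat 1" using matrix_left_right_inverse by blast
  then have "transpose (transpose ?M ** B) = mat 1" by (simp add: transpose_mat)
  then have BM: "transpose B ** ?M = mat 1" by (simp add: matrix_transpose_mul)
  show ?thesis
  proof (intro allI impI)
    fix x assume "?M *v x = 0"
    then have "transpose B *v (?M *v x) = 0" by simp
    then show "x = 0" by (simp add: matrix_vector_mul_assoc BM)
  qed
qed

lemma inner_diff_eq:
  fixes u u' a :: "real^'d"
  assumes "norm (u - a) = norm (u' - a)" "norm u = norm u'"
  shows "u \<bullet> a = u' \<bullet> a"
proof -
  have "norm (u - a)^2 = norm (u' - a)^2" using assms by simp
  then have "u \<bullet> u - 2 * (u \<bullet> a) + a \<bullet> a = u' \<bullet> u' - 2 * (u' \<bullet> a) + a \<bullet> a"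
    unfolding power2_norm_eq_inner by (simp add: inner_diff inner_commute)
  moreover have "u \<bullet> u = u' \<bullet> u'" using assms(2) by (metis power2_norm_eq_inner)
  ultimately show ?thesis by simp
qed

lemma uniq_point:
  fixes z z' c0 :: "real^'d" and a :: "'d \<Rightarrow> real^'d"
  assumes ind: "indep_rows a"
    and d0: "norm (z - c0) = norm (z' - c0)"
    and dr: "\<And>r. norm (z - (c0 + a r)) = norm (z' - (c0 + a r))"
  shows "z = z'"
proof -
  have "\<And>r. (z - c0) \<bullet> a r = (z' - c0) \<bullet> a r"
    using dr d0 by (intro inner_diff_eq) (simp_all add: algebra_simps)
  then have "\<And>r. a r \<bullet> ((z - c0) - (z' - c0)) = 0" by (simp add: inner_diff_right inner_commute)
  then have "(\<chi> r. a r) *v ((z - c0) - (z' - c0)) = 0"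
    by (simp add: vec_eq_iff matrix_vector_mul_component)
  then have "(z - c0) - (z' - c0) = 0" using ker_rows[OF ind] by blast
  then show ?thesis by simp
qed

lemma sum_delta_scale:
  fixes b :: "'r::finite \<Rightarrow> 'a::real_vector"
  shows "(\<Sum>ra\<in>UNIV. (if ra = r then 1 else 0) *\<^sub>R b ra) = b r"
proof -
  have "\<And>ra. (if ra = r then 1 else 0) *\<^sub>R b ra = (if ra = r then b r else 0)" by simp
  then show ?thesis by simp
qed

lemma gram_eq:
  fixes a b :: "'d::finite \<Rightarrow> real^'d"
  assumes "\<And>r s. a r \<bullet> a s = b r \<bullet> b s"
  shows "(\<chi> r. a r) ** transpose (\<chi> r. a r) = (\<chi> r. b r) ** transpose (\<chi> r. b r)"
  using assms by (simp add: vec_eq_iff matrix_matrix_mult_def transpose_def inner_vec_def)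

lemma indep_transfer:
  fixes a b :: "'d::finite \<Rightarrow> real^'d"
  assumes ind: "indep_rows a" and g: "\<And>r s. a r \<bullet> a s = b r \<bullet> b s"
  shows "indep_rows b"
  unfolding indep_rows_def
proof (rule allI, rule impI)
  fix k assume kb: "(\<Sum>r\<in>UNIV. k r *\<^sub>R b r) = 0"
  define v where "v = (\<Sum>r\<in>UNIV. k r *\<^sub>R a r)"
  have vs: "v \<bullet> a s = 0" for s
  proof -
    have "v \<bullet> a s = (\<Sum>r\<in>UNIV. k r * (a r \<bullet> a s))" unfolding v_def by (simp add: inner_sum_left)
    also have "\<dots> = (\<Sum>r\<in>UNIV. k r * (b r \<bullet> b s))" using g by simp
    also have "\<dots> = (\<Sum>r\<in>UNIV. k r *\<^sub>R b r) \<bullet> b s" by (simp add: inner_sum_left)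
    finally show ?thesis using kb by simp
  qed
  have "\<forall>w. (\<Sum>s\<in>UNIV. k s *\<^sub>R a s) \<bullet> w = (\<Sum>s\<in>UNIV. k s * (a s \<bullet> w))" by (simp add: inner_sum_left)
  then have "v \<bullet> v = (\<Sum>s\<in>UNIV. k s * (a s \<bullet> v))" unfolding v_def[symmetric] by blast
  then have "v \<bullet> v = (\<Sum>s\<in>UNIV. k s * (v \<bullet> a s))" by (simp add: inner_commute)
  then have "v \<bullet> v = 0" using vs by simp
  then have "v = 0" by simp
  then show "\<forall>r. k r = 0" using ind unfolding indep_rows_def v_def by blast
qed

lemma iso_exists:
  fixes a b :: "'d::finite \<Rightarrow> real^'d"
  assumes ind: "indep_rows a" and g: "\<And>r s. a r \<bullet> a s = b r \<bullet> b s"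
  shows "\<exists>H::real^'d^'d. (\<forall>x. norm (H *v x) = norm x) \<and> (\<forall>r. H *v b r = a r)"
proof -
  let ?M = "(\<chi> r. a r) :: real^'d^'d"
  let ?W = "(\<chi> r. b r) :: real^'d^'d"
  have indb: "indep_rows b" by (rule indep_transfer[OF ind g])
  obtain Y where Y1: "Y ** transpose ?W = mat 1"
    using ker_transpose[OF indb] matrix_left_invertible_ker by blast
  then have Y2: "transpose ?W ** Y = mat 1" using matrix_left_right_inverse by blast
  define H where "H = transpose ?M ** Y"
  have Hb: "H *v b r = a r" for r
  proof -
    have br: "b r = transpose ?W *v axis r 1"
      unfolding transpose_mv by (simp add: axis_def sum_delta_scale)
    have ar: "a r = transpose ?M *v axis r 1"
      unfolding transpose_mv by (simp add: axis_def sum_delta_scale)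
    have "H *v b r = (transpose ?M ** Y) *v (transpose ?W *v axis r 1)"
      unfolding H_def by (subst br) (rule refl)
    also have "\<dots> = transpose ?M ** (Y ** transpose ?W) *v axis r 1"
      by (simp only: matrix_vector_mul_assoc matrix_mul_assoc)
    also have "\<dots> = a r" unfolding Y1 matrix_mul_rid by (rule ar[symmetric])
    finally show ?thesis .
  qed
  have "transpose H ** H = transpose Y ** (?M ** transpose ?M) ** Y"
    unfolding H_def by (simp add: matrix_transpose_mul matrix_mul_assoc)
  also have "\<dots> = transpose Y ** (?W ** transpose ?W) ** Y" using gram_eq[OF g] by simp
  also have "\<dots> = transpose (transpose ?W ** Y) ** (transpose ?W ** Y)"
    by (simp add: matrix_transpose_mul matrix_mul_assoc)
  also have "\<dots> = mat 1" using Y2 by (simp add: transpose_mat)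
  finally have "orthogonal_matrix H" unfolding orthogonal_matrix by simp
  then have "orthogonal_transformation ((*v) H)"
    by (simp add: orthogonal_transformation_matrix matrix_vector_mul_linear)
  then have "\<forall>x. norm (H *v x) = norm x" using orthogonal_transformation_norm by blast
  then show ?thesis using Hb by blast
qed

lemma inner_from_norms:
  fixes x y x' y' :: "real^'d"
  assumes "norm x = norm x'" "norm y = norm y'" "norm (x - y) = norm (x' - y')"
  shows "x \<bullet> y = x' \<bullet> y'"
proof -
  have "norm (x - y)^2 = norm (x' - y')^2" using assms by simp
  then have "x \<bullet> x - 2 * (x \<bullet> y) + y \<bullet> y = x' \<bullet> x' - 2 * (x' \<bullet> y') + y' \<bullet> y'"
    unfolding power2_norm_eq_inner by (simp add: inner_diff inner_commute)
  moreover have "x \<bullet> x = x' \<bullet> x'" "y \<bullet> y = y' \<bullet> y'" using assms(1,2) by (metis power2_norm_eq_inner)+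
  ultimately show ?thesis by simp
qed

lemma edgeA:
  assumes "u < N" "v < N" "1 \<le> \<bar>int v - int u\<bar>" "\<bar>int v - int u\<bar> \<le> int m"
  shows "(u, v) \<in> edges_of {0..<N} (shA N) m"
proof -
  have "shA N u (int v - int u) = v" unfolding shA_def using assms(2) by simp
  then show ?thesis unfolding edges_of_def using assms by force
qed

lemma A_rigid:
  fixes p :: "nat \<Rightarrow> real^'d" and \<iota> :: "'d \<Rightarrow> nat"
  assumes bij: "bij_betw \<iota> UNIV {0..<CARD('d)}"
    and N: "CARD('d) < N"
    and gen: "\<And>b. b + CARD('d) < N \<Longrightarrow> indep_rows (\<lambda>r. p (b + 1 + \<iota> r) - p b)"
  shows "globally_rigid_fw {0..<N} (edges_of {0..<N} (shA N) (CARD('d) + 1)) p"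
  unfolding globally_rigid_fw_def
proof (intro allI impI)
  let ?n = "CARD('d)"
  let ?E = "edges_of {0..<N} (shA N) (CARD('d) + 1)"
  fix q assume eq: "equivalent_fw {0..<N} ?E p q"
  have ed: "norm (p u - p v) = norm (q u - q v)" if "u < N" "v < N" "1 \<le> \<bar>int v - int u\<bar>" "\<bar>int v - int u\<bar> \<le> int ?n + 1" for u v
    using eq edgeA[of u N v "?n + 1"] that unfolding equivalent_fw_def by simp
  have ed': "norm (p u - p v) = norm (q u - q v)" if "u < N" "v < N" "u \<noteq> v" "u \<le> ?n + 1 + v" "v \<le> ?n + 1 + u" for u v
    using ed[of u v] that by simp
  have ilt: "\<iota> r < ?n" for r using bij unfolding bij_betw_def by auto
  have iinj: "\<iota> r = \<iota> s \<Longrightarrow> r = s" for r s using bij unfolding bij_betw_def inj_on_def by auto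
  define a where "a = (\<lambda>r. p (1 + \<iota> r) - p 0)"
  define b where "b = (\<lambda>r. q (1 + \<iota> r) - q 0)"
  have gab: "a r \<bullet> a s = b r \<bullet> b s" for r s
  proof (rule inner_from_norms)
    show "norm (a r) = norm (b r)" unfolding a_def b_def using ilt[of r] N by (intro ed') auto
    show "norm (a s) = norm (b s)" unfolding a_def b_def using ilt[of s] N by (intro ed') auto
    show "norm (a r - a s) = norm (b r - b s)"
    proof (cases "r = s")
      case True then show ?thesis by simp
    next
      case False
      then have "\<iota> r \<noteq> \<iota> s" using iinj by blast
      then show ?thesis unfolding a_def b_def using ilt[of r] ilt[of s] N by simp (intro ed', auto)
    qed
  qed
  have inda: "indep_rows a" unfolding a_def using gen[of 0] N by simp
  obtain H :: "real^'d^'d" where Hn: "\<And>x. norm (H *v x) = norm x" and Hb: "\<And>r. H *v b r = a r"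
    using iso_exists[OF inda gab] by blast
  define h where "h = (\<lambda>y. p 0 + H *v (y - q 0))"
  have hd: "norm (h y - h y') = norm (y - y')" for y y'
  proof -
    have "h y - h y' = H *v (y - y')" unfolding h_def by (simp add: matrix_vector_mult_diff_distrib)
    then show ?thesis using Hn by simp
  qed
  have main: "v < N \<Longrightarrow> h (q v) = p v" for v
  proof (induction v rule: less_induct)
    case (less v)
    show ?case
    proof (cases "v \<le> ?n")
      case True
      show ?thesis
      proof (cases "v = 0")
        case True then show ?thesis unfolding h_def by simp
      next
        case False
        then have "v - 1 \<in> {0..<?n}" using True by auto
        then obtain r where r: "\<iota> r = v - 1" using bij unfolding bij_betw_def by (metis imageE)
        then have v: "v = 1 + \<iota> r" using False by simp
        have "h (q v) = p 0 + H *v b r" unfolding h_def b_def v by simp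
        also have "\<dots> = p v" using Hb[of r] unfolding a_def v by simp
        finally show ?thesis .
      qed
    next
      case False
      define b0 where "b0 = v - ?n - 1"
      have vb: "v = b0 + ?n + 1" using False unfolding b0_def by simp
      have ind: "indep_rows (\<lambda>r. p (b0 + 1 + \<iota> r) - p b0)" using gen[of b0] less.prems vb by simp
      have hb0: "h (q b0) = p b0" using less.IH[of b0] less.prems vb by simp
      show ?thesis
      proof (rule sym, rule uniq_point[OF ind])
        have "norm (p v - p b0) = norm (q v - q b0)" using less.prems vb by (intro ed') auto
        also have "\<dots> = norm (h (q v) - h (q b0))" using hd by simp
        finally show "norm (p v - p b0) = norm (h (q v) - p b0)" using hb0 by simp
      next
        fix r
        let ?w = "b0 + 1 + \<iota> r"
        have wv: "?w < v" using ilt[of r] vb by simp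
        have hw: "h (q ?w) = p ?w" using less.IH[OF wv] less.prems wv by simp
        have "norm (p v - p ?w) = norm (q v - q ?w)" using less.prems vb ilt[of r] by (intro ed') auto
        also have "\<dots> = norm (h (q v) - h (q ?w))" using hd by simp
        finally show "norm (p v - (p b0 + (p ?w - p b0))) = norm (h (q v) - (p b0 + (p ?w - p b0)))"
          using hw by simp
      qed
    qed
  qed
  show "congruent_fw {0..<N} p q"
    unfolding congruent_fw_def
  proof (intro ballI)
    fix u v assume "u \<in> {0..<N}" "v \<in> {0..<N}"
    then have "h (q u) = p u" "h (q v) = p v" using main by auto
    then show "norm (p u - p v) = norm (q u - q v)" using hd[of "q u" "q v"] by simp
  qed
qed

definition indepS :: "'d set \<Rightarrow> ('d::finite \<Rightarrow> real^'d) \<Rightarrow> bool" where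
  "indepS S a \<longleftrightarrow> (\<forall>k. (\<forall>r. r \<notin> S \<longrightarrow> k r = 0) \<and> (\<Sum>r\<in>UNIV. k r *\<^sub>R a r) = 0 \<longrightarrow> (\<forall>r. k r = 0))"

definition gramS :: "'d set \<Rightarrow> ('d::finite \<Rightarrow> real^'d) \<Rightarrow> real^'d^'d" where
  "gramS S a = (\<chi> r s. if r \<in> S \<and> s \<in> S then a r \<bullet> a s else if r = s then 1 else 0)"

lemma det_nz_iff_ker:
  fixes A :: "real^'n^'n"
  shows "det A \<noteq> 0 \<longleftrightarrow> (\<forall>x. A *v x = 0 \<longrightarrow> x = 0)"
proof -
  have "det A \<noteq> 0 \<longleftrightarrow> invertible A" by (simp add: invertible_det_nz)
  also have "\<dots> \<longleftrightarrow> (\<exists>B. B ** A = mat 1)"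
    unfolding invertible_def using matrix_left_right_inverse by blast
  also have "\<dots> \<longleftrightarrow> (\<forall>x. A *v x = 0 \<longrightarrow> x = 0)" by (rule matrix_left_invertible_ker)
  finally show ?thesis .
qed

lemma gram_mv_out: "r \<notin> S \<Longrightarrow> (gramS S a *v c) $ r = c $ r"
  unfolding gramS_def matrix_vector_mult_def
  by (simp add: if_distrib[of "\<lambda>x. x * _"] cong: if_cong)

lemma gram_mv_in:
  assumes "r \<in> S" "\<forall>s. s \<notin> S \<longrightarrow> c $ s = 0"
  shows "(gramS S a *v c) $ r = a r \<bullet> (\<Sum>s\<in>UNIV. c $ s *\<^sub>R a s)"
proof -
  have "(gramS S a *v c) $ r = (\<Sum>s\<in>UNIV. (a r \<bullet> a s) * c $ s)"
    unfolding gramS_def matrix_vector_mult_def using assms by (auto intro!: sum.cong)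
  also have "\<dots> = a r \<bullet> (\<Sum>s\<in>UNIV. c $ s *\<^sub>R a s)"
    by (simp add: inner_sum_right mult.commute)
  finally show ?thesis .
qed

lemma indepS_iff_det: "indepS S a \<longleftrightarrow> det (gramS S a) \<noteq> 0"
proof
  assume ind: "indepS S a"
  show "det (gramS S a) \<noteq> 0" unfolding det_nz_iff_ker
  proof (intro allI impI)
    fix c assume gc: "gramS S a *v c = 0"
    have out: "\<forall>s. s \<notin> S \<longrightarrow> c $ s = 0" using gram_mv_out[of _ S a c] gc by (metis zero_index)
    define v where "v = (\<Sum>s\<in>UNIV. c $ s *\<^sub>R a s)"
    have inn: "c $ r * (a r \<bullet> v) = 0" for r
    proof (cases "r \<in> S")
      case True
      then show ?thesis using gram_mv_in[OF True out, of a] gc unfolding v_def by (metis zero_index mult_zero_right)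
    next
      case False
      then show ?thesis using out by simp
    qed
    have "\<forall>w. (\<Sum>s\<in>UNIV. c $ s *\<^sub>R a s) \<bullet> w = (\<Sum>s\<in>UNIV. c $ s * (a s \<bullet> w))"
      by (simp add: inner_sum_left)
    then have "v \<bullet> v = (\<Sum>s\<in>UNIV. c $ s * (a s \<bullet> v))" unfolding v_def[symmetric] by blast
    then have "v \<bullet> v = 0" using inn by simp
    then have "v = 0" by simp
    then have "\<forall>r. c $ r = 0" using ind out unfolding indepS_def v_def by blast
    then show "c = 0" by (simp add: vec_eq_iff)
  qed
next
  assume d: "det (gramS S a) \<noteq> 0"
  show "indepS S a" unfolding indepS_def
  proof (rule allI, rule impI)
    fix k assume k: "(\<forall>r. r \<notin> S \<longrightarrow> k r = 0) \<and> (\<Sum>r\<in>UNIV. k r *\<^sub>R a r) = 0"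
    define c where "c = (\<chi> r. k r)"
    have out: "\<forall>s. s \<notin> S \<longrightarrow> c $ s = 0" using k unfolding c_def by simp
    have "gramS S a *v c = 0"
    proof (subst vec_eq_iff, rule allI)
      fix r show "(gramS S a *v c) $ r = 0 $ r"
      proof (cases "r \<in> S")
        case True
        then show ?thesis using gram_mv_in[OF True out, of a] k unfolding c_def by simp
      next
        case False
        then show ?thesis using gram_mv_out[OF False, of a c] out by simp
      qed
    qed
    then have "c = 0" using d unfolding det_nz_iff_ker by blast
    then show "\<forall>r. k r = 0" unfolding c_def by (simp add: vec_eq_iff)
  qed
qed


definition rowsP :: "nat \<Rightarrow> ('d \<Rightarrow> nat) \<Rightarrow> (nat \<Rightarrow> real^'d) \<Rightarrow> 'd \<Rightarrow> real^'d" where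
  "rowsP b w p r = p (w r) - p b"

lemma meas_entry:
  assumes "b \<in> V" "\<And>r. w r \<in> V"
  shows "(\<lambda>p. gramS S (rowsP b w p) $ r $ s) \<in> borel_measurable (PiM V (\<lambda>_. lborel :: (real^'d::finite) measure))"
proof -
  have c: "(\<lambda>p. p i) \<in> borel_measurable (PiM V (\<lambda>_. lborel :: (real^'d) measure))" if "i \<in> V" for i
    using measurable_component_singleton[OF that, of "\<lambda>_. lborel :: (real^'d) measure"]
    by (simp add: measurable_lborel2)
  have "(\<lambda>p. rowsP b w p r \<bullet> rowsP b w p s) \<in> borel_measurable (PiM V (\<lambda>_. lborel :: (real^'d) measure))"
    unfolding rowsP_def using c assms by (intro borel_measurable_inner borel_measurable_diff) auto
  then show ?thesis unfolding gramS_def by simp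
qed

lemma meas_det:
  assumes "b \<in> V" "\<And>r. w r \<in> V"
  shows "(\<lambda>p. det (gramS S (rowsP b w p))) \<in> borel_measurable (PiM V (\<lambda>_. lborel :: (real^'d::finite) measure))"
  unfolding det_def
  using meas_entry[OF assms]
  by (intro borel_measurable_sum borel_measurable_times borel_measurable_const borel_measurable_prod) auto


lemma sets_Z:
  assumes "b \<in> V" "\<And>r. w r \<in> V"
  shows "{p \<in> space (PiM V (\<lambda>_. lborel)). \<not> indepS S (rowsP b w p)} \<in> sets (PiM V (\<lambda>_. lborel :: (real^'d::finite) measure))"
proof -
  have "{p \<in> space (PiM V (\<lambda>_. lborel)). \<not> indepS S (rowsP b w p)} =
        (\<lambda>p. det (gramS S (rowsP b w p))) -` {0} \<inter> space (PiM V (\<lambda>_. lborel :: (real^'d) measure))"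
    by (auto simp: indepS_iff_det)
  then show ?thesis using borel_measurable_vimage[OF meas_det[OF assms]] by simp
qed

lemma lowdim_null:
  fixes W :: "(real^'d::finite) set"
  assumes "finite W" "card W < CARD('d)"
  shows "emeasure lborel ((+) c ` span W) = 0"
proof -
  have "dim (span W) \<le> card W" using dim_le_card[of "span W" W] assms(1) by simp
  then have "dim (span W) < DIM(real^'d)" using assms(2) by simp
  then have "negligible (span W)" by (rule negligible_lowdim)
  then have "negligible ((+) c ` span W)" by (rule negligible_translation)
  then have n: "(+) c ` span W \<in> null_sets lebesgue" by (simp add: negligible_iff_null_sets)
  have "closed ((+) c ` span W)" by (intro closed_translation closed_subspace subspace_span)
  then have "(+) c ` span W \<in> sets lborel" by (simp add: borel_closed)
  then have "(+) c ` span W \<in> null_sets lborel" using n null_sets_completion_iff by blast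
  then show ?thesis by auto
qed

lemma step_null:
  fixes w :: "'d::finite \<Rightarrow> nat"
  assumes fin: "finite V" and bV: "b \<in> V" and wV: "\<And>r. w r \<in> V" and inj: "inj w"
    and bw: "\<And>r. w r \<noteq> b" and r0: "r0 \<notin> S"
  shows "{p \<in> space (PiM V (\<lambda>_. lborel)). \<not> indepS (insert r0 S) (rowsP b w p) \<and> indepS S (rowsP b w p)}
           \<in> null_sets (PiM V (\<lambda>_. lborel :: (real^'d) measure))"
proof -
  let ?M = "PiM V (\<lambda>_. lborel :: (real^'d) measure)"
  define Y where "Y = {p \<in> space ?M. \<not> indepS (insert r0 S) (rowsP b w p) \<and> indepS S (rowsP b w p)}"
  have YZ: "Y = {p \<in> space ?M. \<not> indepS (insert r0 S) (rowsP b w p)} - {p \<in> space ?M. \<not> indepS S (rowsP b w p)}"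
    unfolding Y_def by auto
  have Ys: "Y \<in> sets ?M" unfolding YZ using sets_Z[of b V w, OF bV wV] by blast
  define v where "v = w r0"
  define V' where "V' = V - {v}"
  have VV: "V = insert v V'" unfolding V'_def v_def using wV by auto
  have vV': "v \<notin> V'" "finite V'" unfolding V'_def using fin by auto
  define T where "T = (\<lambda>x :: nat \<Rightarrow> real^'d. (+) (x b) ` span (rowsP b w x ` S))"
  have cardS: "card S < CARD('d)"
  proof -
    have "S \<subseteq> UNIV - {r0}" using r0 by auto
    then have "card S \<le> card (UNIV - {r0} :: 'd set)" by (intro card_mono) auto
    also have "\<dots> = CARD('d) - 1" by (simp add: card_Diff_singleton)
    finally have "card S \<le> CARD('d) - 1" .
    moreover have "0 < CARD('d)" by simp
    ultimately show ?thesis by linarith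
  qed
  have Tnull: "emeasure lborel (T x) = 0" for x
    unfolding T_def using cardS card_image_le[of S "rowsP b w x"]
    by (intro lowdim_null) auto
  have Tsets: "T x \<in> sets lborel" for x
  proof -
    have "closed (T x)" unfolding T_def by (intro closed_translation closed_subspace subspace_span)
    then show ?thesis by (simp add: borel_closed)
  qed
  have sec: "y \<in> T x" if Y: "x(v := y) \<in> Y" for x y
  proof -
    let ?p = "x(v := y)"
    have same: "rowsP b w ?p s = rowsP b w x s" if "s \<noteq> r0" for s
    proof -
      have "w s \<noteq> v" unfolding v_def using inj that by (meson injD)
      moreover have "b \<noteq> v" unfolding v_def using bw by metis
      ultimately show ?thesis unfolding rowsP_def by simp
    qed
    have r0row: "rowsP b w ?p r0 = y - x b"
    proof -
      have "b \<noteq> v" unfolding v_def using bw by metis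
      then show ?thesis unfolding rowsP_def v_def by simp
    qed
    from Y have ni: "\<not> indepS (insert r0 S) (rowsP b w ?p)" and iS: "indepS S (rowsP b w ?p)" unfolding Y_def by auto
    then obtain k where ksup: "\<forall>r. r \<notin> insert r0 S \<longrightarrow> k r = 0"
      and ksum: "(\<Sum>r\<in>UNIV. k r *\<^sub>R rowsP b w ?p r) = 0" and knz: "\<exists>r. k r \<noteq> 0"
      unfolding indepS_def by blast
    have k0: "k r0 \<noteq> 0"
    proof
      assume "k r0 = 0"
      then have "\<forall>r. r \<notin> S \<longrightarrow> k r = 0" using ksup by auto
      then have "\<forall>r. k r = 0" using iS ksum unfolding indepS_def by blast
      then show False using knz by blast
    qed
    have "(\<Sum>r\<in>UNIV. k r *\<^sub>R rowsP b w ?p r) = k r0 *\<^sub>R (y - x b) + (\<Sum>r\<in>UNIV - {r0}. k r *\<^sub>R rowsP b w x r)"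
      by (subst sum.remove[of UNIV r0]) (auto simp: r0row same intro!: sum.cong)
    then have eq: "k r0 *\<^sub>R (y - x b) = - (\<Sum>r\<in>UNIV - {r0}. k r *\<^sub>R rowsP b w x r)"
      using ksum by (simp add: eq_neg_iff_add_eq_0)
    have ins: "(\<Sum>r\<in>UNIV - {r0}. k r *\<^sub>R rowsP b w x r) \<in> span (rowsP b w x ` S)"
    proof (rule span_sum)
      fix r assume "r \<in> UNIV - {r0}"
      show "k r *\<^sub>R rowsP b w x r \<in> span (rowsP b w x ` S)"
      proof (cases "r \<in> S")
        case True then show ?thesis by (intro span_scale span_base) auto
      next
        case False then have "k r = 0" using ksup \<open>r \<in> UNIV - {r0}\<close> by auto
        then show ?thesis by (simp add: span_zero)
      qed
    qed
    have yb: "y - x b = (- inverse (k r0)) *\<^sub>R (\<Sum>r\<in>UNIV - {r0}. k r *\<^sub>R rowsP b w x r)"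
    proof -
      have "y - x b = inverse (k r0) *\<^sub>R (k r0 *\<^sub>R (y - x b))" using k0 by simp
      also have "\<dots> = (- inverse (k r0)) *\<^sub>R (\<Sum>r\<in>UNIV - {r0}. k r *\<^sub>R rowsP b w x r)" unfolding eq by simp
      finally show ?thesis .
    qed
    have "y - x b \<in> span (rowsP b w x ` S)" by (subst yb) (rule span_scale[OF ins])
    then have "x b + (y - x b) \<in> T x" unfolding T_def by blast
    then show ?thesis by simp
  qed
  have ind_meas: "indicator Y \<in> borel_measurable (PiM (insert v V') (\<lambda>_. lborel :: (real^'d) measure))"
    using Ys VV by simp
  have "emeasure ?M Y = (\<integral>\<^sup>+ p. indicator Y p \<partial>?M)" using Ys by (simp add: nn_integral_indicator)
  also have "\<dots> = (\<integral>\<^sup>+ x. \<integral>\<^sup>+ y. indicator Y (x(v := y)) \<partial>lborel \<partial>PiM V' (\<lambda>_. lborel))"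
    unfolding VV by (rule product_sigma_finite.product_nn_integral_insert[OF prod_sf_lborel vV'(2) vV'(1) ind_meas])
  also have "\<dots> = (\<integral>\<^sup>+ x. 0 \<partial>PiM V' (\<lambda>_. lborel :: (real^'d) measure))"
  proof (rule nn_integral_cong)
    fix x :: "nat \<Rightarrow> real^'d"
    have "(\<integral>\<^sup>+ y. indicator Y (x(v := y)) \<partial>lborel) \<le> (\<integral>\<^sup>+ y. indicator (T x) y \<partial>lborel)"
      by (intro nn_integral_mono) (auto simp: indicator_def dest: sec)
    also have "\<dots> = 0" using Tsets Tnull by (simp add: nn_integral_indicator)
    finally show "(\<integral>\<^sup>+ y. indicator Y (x(v := y)) \<partial>lborel) = 0" by simp
  qed
  also have "\<dots> = 0" by simp
  finally have "emeasure ?M Y = 0" .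
  then show ?thesis using Ys unfolding Y_def by auto
qed

lemma generic_AE:
  fixes w :: "'d::finite \<Rightarrow> nat"
  assumes fin: "finite V" and bV: "b \<in> V" and wV: "\<And>r. w r \<in> V" and inj: "inj w"
    and bw: "\<And>r. w r \<noteq> b"
  shows "AE p in PiM V (\<lambda>_. lborel :: (real^'d) measure). indep_rows (\<lambda>r. p (w r) - p b)"
proof -
  let ?M = "PiM V (\<lambda>_. lborel :: (real^'d) measure)"
  have "{p \<in> space ?M. \<not> indepS S (rowsP b w p)} \<in> null_sets ?M" if "finite S" for S :: "'d set"
    using that
  proof (induction S rule: finite_induct)
    case empty
    have "indepS {} a" for a :: "'d \<Rightarrow> real^'d" unfolding indepS_def by auto
    then show ?case by simp
  next
    case (insert r0 S)
    have SUB: "{p \<in> space ?M. \<not> indepS (insert r0 S) (rowsP b w p)} \<subseteq>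
          {p \<in> space ?M. \<not> indepS S (rowsP b w p)} \<union>
          {p \<in> space ?M. \<not> indepS (insert r0 S) (rowsP b w p) \<and> indepS S (rowsP b w p)}" by blast
    have NU: "{p \<in> space ?M. \<not> indepS S (rowsP b w p)} \<union>
          {p \<in> space ?M. \<not> indepS (insert r0 S) (rowsP b w p) \<and> indepS S (rowsP b w p)} \<in> null_sets ?M"
      using insert.IH step_null[of V b w, OF fin bV wV inj bw insert.hyps(2)] by (rule null_sets.Un)
    show ?case by (rule null_sets_subset[OF NU sets_Z[of b V w "insert r0 S", OF bV wV] SUB])
  qed
  then have N: "{p \<in> space ?M. \<not> indepS UNIV (rowsP b w p)} \<in> null_sets ?M" by simp
  have "indepS UNIV a = indep_rows a" for a :: "'d \<Rightarrow> real^'d" unfolding indepS_def indep_rows_def by simp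
  moreover have rw: "rowsP b w p = (\<lambda>r. p (w r) - p b)" for p :: "nat \<Rightarrow> real^'d"
    by (simp add: fun_eq_iff rowsP_def)
  ultimately show ?thesis by (intro AE_I'[OF N]) auto
qed

lemma glob_loc: "globally_rigid_fw V E p \<Longrightarrow> locally_rigid_fw V E p"
  unfolding globally_rigid_fw_def locally_rigid_fw_def by (intro exI[of _ 1]) auto

lemma edges_graph:
  assumes "good_sh V sh N"
  shows "is_graph (edges_of V sh m)"
  unfolding is_graph_def edges_of_def
proof (intro allI impI)
  fix u v assume "(u, v) \<in> {(x, y). x \<in> V \<and> y \<in> V \<and> (\<exists>\<delta>. 1 \<le> \<bar>\<delta>\<bar> \<and> \<bar>\<delta>\<bar> \<le> int m \<and> y = sh x \<delta>)}"
  then obtain \<delta> where h: "u \<in> V" "v \<in> V" "1 \<le> \<bar>\<delta>\<bar>" "\<bar>\<delta>\<bar> \<le> int m" "v = sh u \<delta>" by blast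
  then have "u = sh v (- \<delta>)" using good_back[OF assms] by blast
  then have "\<exists>\<delta>'. 1 \<le> \<bar>\<delta>'\<bar> \<and> \<bar>\<delta>'\<bar> \<le> int m \<and> u = sh v \<delta>'"
    using h by (intro exI[of _ "-\<delta>"]) simp
  then show "(v, u) \<in> {(x, y). x \<in> V \<and> y \<in> V \<and> (\<exists>\<delta>. 1 \<le> \<bar>\<delta>\<bar> \<and> \<bar>\<delta>\<bar> \<le> int m \<and> y = sh x \<delta>)}"
    using h(1,2) by simp
qed

lemma edges_sub: "edges_of V sh m \<subseteq> V \<times> V"
  unfolding edges_of_def by auto

lemma A_AE:
  assumes N: "CARD('d) < N"
  shows "AE p in config_measure {0..<N} TYPE('d::finite).
           globally_rigid_fw {0..<N} (edges_of {0..<N} (shA N) (CARD('d) + 1)) (p :: nat \<Rightarrow> real^'d)"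
proof -
  obtain \<iota> :: "'d \<Rightarrow> nat" where bij: "bij_betw \<iota> UNIV {0..<CARD('d)}"
    using ex_bij_betw_finite_nat[of "UNIV :: 'd set"] by auto
  have ilt: "\<iota> r < CARD('d)" for r using bij unfolding bij_betw_def by auto
  have inj: "inj \<iota>" using bij unfolding bij_betw_def by auto
  have "AE p in PiM {0..<N} (\<lambda>_. lborel :: (real^'d) measure).
          \<forall>b\<in>{b. b + CARD('d) < N}. indep_rows (\<lambda>r. p (b + 1 + \<iota> r) - p b)"
  proof (rule AE_finite_allI)
    show "finite {b. b + CARD('d) < N}" by (rule finite_subset[of _ "{..<N}"]) auto
  next
    fix b assume "b \<in> {b. b + CARD('d) < N}"
    then have bN: "b + CARD('d) < N" by simp
    have injw: "inj (\<lambda>r. b + 1 + \<iota> r)" using inj unfolding inj_def by auto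
    show "AE p in PiM {0..<N} (\<lambda>_. lborel :: (real^'d) measure). indep_rows (\<lambda>r. p (b + 1 + \<iota> r) - p b)"
    proof (rule generic_AE[OF _ _ _ injw])
      have wlt: "b + 1 + \<iota> r < N" for r using ilt[of r] bN by linarith
      then show "\<And>r. b + 1 + \<iota> r \<in> {0..<N}" by simp
      show "b \<in> {0..<N}" using bN by simp
      show "finite {0..<N}" by simp
      show "\<And>r. b + 1 + \<iota> r \<noteq> b" by simp
    qed
  qed
  then show ?thesis unfolding config_measure_def
    by (rule AE_mp) (intro AE_I2 impI, rule A_rigid[OF bij N], auto)
qed

lemma key:
  fixes Q :: "nat set \<Rightarrow> (nat \<times> nat) set \<Rightarrow> bool"
  assumes QA: "\<And>N. CARD('d::finite) < N \<Longrightarrow> Q {0..<N} (edges_of {0..<N} (shA N) (CARD('d) + 1))"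
    and QB: "\<And>N. 0 < N \<Longrightarrow> \<not> Q {0..<2*N} (edges_of {0..<2*N} (shB N) (CARD('d) + 1))"
  shows "\<not> fo_definable Q"
proof
  assume "fo_definable Q"
  then obtain \<phi> where s: "sentence \<phi>" and def: "\<And>V E. finite V \<Longrightarrow> E \<subseteq> V \<times> V \<Longrightarrow> models V E \<phi> = Q V E"
    unfolding fo_definable_def by blast
  let ?K = "qr \<phi>"
  let ?m = "CARD('d) + 1"
  define N where "N = ?K * (2 * (?m * 2 ^ ?K) + 1) + CARD('d) + 1"
  have N0: "0 < N" and Nd: "CARD('d) < N" and bigA: "?K * (2 * (?m * 2 ^ ?K) + 1) < card {0..<N}"
    and bigB: "?K * (2 * (?m * 2 ^ ?K) + 1) < card {0..<2*N}" unfolding N_def by auto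
  have "models {0..<N} (edges_of {0..<N} (shA N) ?m) \<phi> = models {0..<2*N} (edges_of {0..<2*N} (shB N) ?m) \<phi>"
    by (rule ef_sentence[OF good_A[OF N0] good_B[OF N0] _ _ bigA bigB s]) auto
  moreover have "models {0..<N} (edges_of {0..<N} (shA N) ?m) \<phi>" using def[OF _ edges_sub] QA[OF Nd] by simp
  moreover have "\<not> models {0..<2*N} (edges_of {0..<2*N} (shB N) ?m) \<phi>" using def[OF _ edges_sub] QB[OF N0] by simp
  ultimately show False by simp
qed

theorem theorem4p9:
  shows "\<not> fo_definable (LOC TYPE('d::finite)) \<and> \<not> fo_definable (GLO TYPE('d::finite))"
proof
  show "\<not> fo_definable (LOC TYPE('d))"
  proof (rule key)
    fix N assume N: "CARD('d) < N"
    then have N0: "0 < N" by simp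
    show "LOC TYPE('d) {0..<N} (edges_of {0..<N} (shA N) (CARD('d) + 1))"
      unfolding LOC_def locally_d_rigid_def
      using edges_graph[OF good_A[OF N0]] eventually_mono[OF A_AE[OF N] glob_loc] by simp
  next
    fix N :: nat assume N0: "0 < N"
    show "\<not> LOC TYPE('d) {0..<2*N} (edges_of {0..<2*N} (shB N) (CARD('d) + 1))"
      unfolding LOC_def locally_d_rigid_def config_measure_def
      using not_AE_if_never[of "{0..<2*N}" "locally_rigid_fw {0..<2*N} (edges_of {0..<2*N} (shB N) (CARD('d) + 1))"]
        B_not_loc[OF N0] by blast
  qed
  show "\<not> fo_definable (GLO TYPE('d))"
  proof (rule key)
    fix N assume N: "CARD('d) < N"
    then have N0: "0 < N" by simp
    show "GLO TYPE('d) {0..<N} (edges_of {0..<N} (shA N) (CARD('d) + 1))"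
      unfolding GLO_def globally_d_rigid_def
      using edges_graph[OF good_A[OF N0]] A_AE[OF N] by auto
  next
    fix N :: nat assume N0: "0 < N"
    show "\<not> GLO TYPE('d) {0..<2*N} (edges_of {0..<2*N} (shB N) (CARD('d) + 1))"
      unfolding GLO_def globally_d_rigid_def config_measure_def
      using not_AE_if_never[of "{0..<2*N}" "globally_rigid_fw {0..<2*N} (edges_of {0..<2*N} (shB N) (CARD('d) + 1))"]
        B_not_loc[OF N0] glob_loc by blast
  qed
qed

end
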